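(* Define $d_1=d_2=5/36$ and, for $l\ge 2$, $d_{l+1} = d_l + \sum_{i=1}^{l-1} \frac{d_i d_{l-i}}{(l+1)\binom{l}{i}}$. Then $\frac{1}{2\pi}-d_l = O(1/l)$ as $l\to\infty$.
   Context: It is known (Wright; Voblyi) that $(d_l)$ is increasing and converges to $1/(2\pi)$. *)

theory Defs
  imports "HOL-Analysis.Analysis" "HOL-Library.Landau_Symbols"
begin

text \<open>The value at index 0 is an irrelevant convention (set to 0).\<close>

function dseq :: "nat \<Rightarrow> real" where
  "dseq l = (if l = 0 then 0
             else if l \<le> 2 then 5/36
             else dseq (l - 1) +
                  (\<Sum>i\<in>{1..l-2}. dseq i * dseq (l - 1 - i) /
                       (real l * real ((l - 1) choose i))))"
  by pat_completeness auto
termination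
  by (relation "Wellfounded.measure id") auto

end

theory Submission
  imports Defs "HOL-Real_Asymp.Real_Asymp" "HOL-Computational_Algebra.Formal_Power_Series"
begin

declare dseq.simps[simp del]

definition wseq :: "nat \<Rightarrow> real" where
  "wseq n = pochhammer (1/6) n * pochhammer (5/6) n / fact n"
definition vseq :: "nat \<Rightarrow> real" where
  "vseq n = wseq n / fact (n - 1)"

lemma wseq_Suc: "real (Suc n) * wseq (Suc n) = (real n ^ 2 + real n + 5/36) * wseq n"
proof -
  have f: "fact (Suc n) = real (Suc n) * (fact n :: real)" by simp
  have "real (Suc n) * wseq (Suc n) = pochhammer (1/6) n * (1/6 + real n) * (pochhammer (5/6) n * (5/6 + real n)) / fact n"
    unfolding wseq_def f pochhammer_Suc by (simp del: of_nat_Suc)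
  also have "\<dots> = (real n ^ 2 + real n + 5/36) * wseq n"
    unfolding wseq_def by (simp add: field_simps power2_eq_square)
  finally show ?thesis .
qed

lemma wseq_nonneg: "wseq n \<ge> 0"
  unfolding wseq_def by (intro divide_nonneg_pos mult_nonneg_nonneg pochhammer_nonneg) auto

lemma wseq_0: "wseq 0 = 1" by (simp add: wseq_def)

lemma vseq_Suc: assumes "n \<ge> 1"
  shows "vseq (Suc n) = vseq n * (1 + (5/36) / (real n * real (Suc n)))"
proof -
  obtain m where m: "n = Suc m" using assms by (cases n) auto
  have fn: "fact n = real n * fact m" using m by simp
  have fpos: "(fact m :: real) > 0" by simp
  have np: "real n > 0" using assms by simp
  have v1: "vseq (Suc n) = wseq (Suc n) / fact n" by (simp add: vseq_def)
  have w1: "wseq (Suc n) = (real n ^ 2 + real n + 5/36) * wseq n / real (Suc n)"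
    using wseq_Suc[of n] by (simp add: field_simps del: of_nat_Suc)
  have v0: "wseq n = vseq n * fact m" using m fpos by (simp add: vseq_def)
  have "vseq (Suc n) = (real n ^ 2 + real n + 5/36) * (vseq n * fact m) / real (Suc n) / (real n * fact m)"
    using v1 w1 v0 fn by simp
  also have "\<dots> = vseq n * ((real n ^ 2 + real n + 5/36) / (real n * real (Suc n)))"
    using fpos np by (simp add: field_simps del: of_nat_Suc)
  also have "(real n ^ 2 + real n + 5/36) / (real n * real (Suc n)) = 1 + (5/36) / (real n * real (Suc n))"
  proof -
    have p: "real n * real (Suc n) > 0" using np by simp
    have "real n ^ 2 + real n + 5/36 = real n * real (Suc n) + 5/36" by (simp add: power2_eq_square algebra_simps)
    thus ?thesis using p np assms by (simp add: add_divide_distrib)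
  qed
  finally show ?thesis .
qed

lemma Gamma_prod: "Gamma (1/6::real) * Gamma (5/6) = 2 * pi"
proof -
  have r: "Gamma (complex_of_real (1/6)) * Gamma (1 - complex_of_real (1/6))
        = of_real pi / sin (of_real pi * complex_of_real (1/6))"
    by (rule Gamma_reflection_complex)
  have a: "1 - complex_of_real (1/6) = complex_of_real (5/6)" by simp
  have b: "of_real pi * complex_of_real (1/6) = complex_of_real (pi * (1/6))" by simp
  have "complex_of_real (Gamma (1/6) * Gamma (5/6)) = complex_of_real (pi / sin (pi * (1/6)))"
    using r unfolding a b Gamma_complex_of_real sin_of_real of_real_mult[symmetric] of_real_divide[symmetric] .
  hence "Gamma (1/6::real) * Gamma (5/6) = pi / sin (pi * (1/6))" using of_real_eq_iff by blast
  thus ?thesis by (simp add: sin_30)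
qed

lemma alg1: fixes F n a b :: real assumes "F > 0" "n > 0" "a > 0" "b > 0"
  shows "n^2 / ((n + 1/6) * (n + 5/6)) / ((n * F)^2 * n / (a * (1/6 + n) * (b * (5/6 + n))))
     = a * b / (n * F * F)" (is "?l = ?r")
proof -
  have x: "(n + 1/6) * (n + 5/6) > 0" using assms by auto
  have g: "\<And>x. x > 0 \<Longrightarrow> n^2 / x / ((n * F)^2 * n / (a * b * x)) = a * b / (n * F * F)"
    using assms by (simp add: field_simps power2_eq_square)
  have "a * (1/6 + n) * (b * (5/6 + n)) = a * b * ((n + 1/6) * (n + 5/6))" by (simp add: algebra_simps)
  then show ?thesis using g[OF x] by (simp only:)
qed

lemma vseq_lim: "vseq \<longlonglongrightarrow> 1 / (2 * pi)"
proof -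
  let ?g = "\<lambda>n. (real n)^2 / ((real n + 1/6) * (real n + 5/6)) / (Gamma_series (1/6::real) n * Gamma_series (5/6) n)"
  have "?g \<longlonglongrightarrow> 1 / (Gamma (1/6::real) * Gamma (5/6))"
  proof (intro tendsto_divide tendsto_mult Gamma_series_LIMSEQ)
    show "(\<lambda>n. (real n)^2 / ((real n + 1/6) * (real n + 5/6))) \<longlonglongrightarrow> 1" by real_asymp
  qed (use Gamma_prod in auto)
  moreover have "eventually (\<lambda>n. ?g n = vseq n) sequentially"
    using eventually_gt_at_top[of 0]
  proof eventually_elim
    case (elim n)
    then obtain m where m: "n = Suc m" by (cases n) auto
    have e: "exp (1/6 * ln (real n)) * exp (5/6 * ln (real n)) = real n"
      using elim by (simp flip: exp_add add: distrib_right[symmetric])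
    have p1: "pochhammer (1/6::real) n > 0" "pochhammer (5/6::real) n > 0"
      by (auto intro!: pochhammer_pos)
    have "Gamma_series (1/6::real) n * Gamma_series (5/6) n
       = (fact n)^2 * real n / (pochhammer (1/6) n * (1/6 + real n) * (pochhammer (5/6) n * (5/6 + real n)))"
      unfolding Gamma_series_def using e
      by (simp add: pochhammer_Suc power2_eq_square field_simps)
    moreover have "fact n = real n * fact m" using m by simp
    ultimately have "?g n = pochhammer (1/6) n * pochhammer (5/6) n / (real n * fact m * fact m)"
      using alg1[of "fact m" "real n" "pochhammer (1/6) n" "pochhammer (5/6) n"] elim p1 by simp
    thus ?case using m unfolding vseq_def wseq_def by simp
  qed
  ultimately show ?thesis using Gamma_prod by (simp add: tendsto_cong)
qed


lemma dseq_nonneg: "dseq n \<ge> 0"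
proof (induction n rule: less_induct)
  case (less n)
  show ?case
    by (subst dseq.simps) (auto intro!: add_nonneg_nonneg sum_nonneg divide_nonneg_nonneg mult_nonneg_nonneg less)
qed

lemma dseq_0: "dseq 0 = 0" by (subst dseq.simps) simp
lemma dseq_1: "dseq 1 = 5/36" by (subst dseq.simps) simp
lemma dseq_2: "dseq 2 = 5/36" by (subst dseq.simps) simp
lemma dseq_S1: "dseq (Suc 0) = 5/36" by (subst dseq.simps) simp
lemma dseq_S2: "dseq (Suc (Suc 0)) = 5/36" by (subst dseq.simps) simp

definition fseq :: "nat \<Rightarrow> real" where "fseq n = fact n * dseq n"

lemma fseq_0: "fseq 0 = 0" by (simp add: fseq_def dseq_0)
lemma fseq_1: "fseq 1 = 5/36" by (simp add: fseq_def dseq_S1)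

lemma fseq_rec: assumes "l \<ge> 1"
  shows "fseq (Suc l) = real (Suc l) * fseq l + (\<Sum>i=1..l-1. fseq i * fseq (l - i))"
proof (cases "l = 1")
  case True
  then show ?thesis by (simp add: fseq_def dseq_S1 dseq_S2)
next
  case False
  hence l2: "l \<ge> 2" using assms by simp
  have d: "dseq (Suc l) = dseq l + (\<Sum>i\<in>{1..l-1}. dseq i * dseq (l - i) / (real (Suc l) * real (l choose i)))"
    using l2 by (subst dseq.simps) (simp add: numeral_2_eq_2)
  have t: "fact (Suc l) * (dseq i * dseq (l - i) / (real (Suc l) * real (l choose i))) = fseq i * fseq (l - i)"
    if "i \<in> {1..l-1}" for i
  proof -
    have il: "i \<le> l" using that by auto
    have bf: "fact i * fact (l - i) * real (l choose i) = (fact l :: real)"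
      using binomial_fact_lemma[OF il] by (metis of_nat_fact of_nat_mult)
    have "real (l choose i) > 0" using il by simp
    then show ?thesis unfolding fseq_def using bf[symmetric]
      by (simp add: field_simps del: of_nat_Suc)
  qed
  have "fseq (Suc l) = fact (Suc l) * dseq l + (\<Sum>i\<in>{1..l-1}. fact (Suc l) * (dseq i * dseq (l - i) / (real (Suc l) * real (l choose i))))"
    unfolding fseq_def d by (simp add: sum_distrib_left distrib_left)
  also have "\<dots> = real (Suc l) * fseq l + (\<Sum>i=1..l-1. fseq i * fseq (l - i))"
    using t by (simp add: fseq_def)
  finally show ?thesis .
qed


lemma eqF: "Abs_fps fseq = fps_X * fps_const (5/36) + fps_X * Abs_fps fseq
   + fps_X * (fps_X * fps_deriv (Abs_fps fseq)) + fps_X * (Abs_fps fseq * Abs_fps fseq)"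
  (is "?F = ?R")
proof (rule fps_ext)
  fix n
  show "fps_nth ?F n = fps_nth ?R n"
  proof (cases n)
    case 0 then show ?thesis by (simp add: fseq_0)
  next
    case (Suc k)
    show ?thesis
    proof (cases k)
      case 0 then show ?thesis using Suc using fseq_1 by (simp add: fseq_0 fps_mult_nth[of "Abs_fps fseq" "Abs_fps fseq"])
    next
      case (Suc m)
      have s: "(\<Sum>i=0..Suc m. fseq i * fseq (Suc m - i)) = (\<Sum>i=1..m. fseq i * fseq (Suc m - i))"
        by (simp add: sum.atLeast_Suc_atMost fseq_0 sum.atLeast0_atMost_Suc)
      have "fseq (Suc (Suc m)) = real (Suc (Suc m)) * fseq (Suc m) + (\<Sum>i=1..m. fseq i * fseq (Suc m - i))"
        using fseq_rec[of "Suc m"] by simp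
      then show ?thesis using \<open>n = Suc k\<close> Suc s by (simp add: fps_mult_nth[of "Abs_fps fseq" "Abs_fps fseq"] algebra_simps)
    qed
  qed
qed

lemma eqW: "fps_X * (fps_X * fps_deriv (fps_deriv (Abs_fps wseq))) + fps_const 2 * (fps_X * fps_deriv (Abs_fps wseq))
   - fps_deriv (Abs_fps wseq) + fps_const (5/36) * Abs_fps wseq = 0"
  (is "?R = 0")
proof (rule fps_ext)
  fix n
  have w: "real (Suc n) * wseq (Suc n) = (real n ^ 2 + real n + 5/36) * wseq n" by (rule wseq_Suc)
  show "fps_nth ?R n = fps_nth 0 n"
  proof (cases n)
    case 0 then show ?thesis using w by simp
  next
    case (Suc k)
    show ?thesis
    proof (cases k)
      case 0 then show ?thesis using Suc w by (simp add: algebra_simps)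
    next
      case (Suc m)
      then show ?thesis using \<open>n = Suc k\<close> w by (simp add: algebra_simps power2_eq_square)
    qed
  qed
qed

lemma Geq:
  fixes F W :: "real fps"
  defines "G \<equiv> fps_X * fps_deriv W - F * W"
  assumes eF: "F = fps_X * fps_const (5/36) + fps_X * F + fps_X * (fps_X * fps_deriv F) + fps_X * (F * F)"
  and eW: "fps_X * (fps_X * fps_deriv (fps_deriv W)) + fps_const 2 * (fps_X * fps_deriv W)
   - fps_deriv W + fps_const (5/36) * W = 0"
  shows "G = fps_X * (fps_X * fps_deriv G + G + F * G)"
proof -
  have d: "fps_deriv G = fps_deriv W + fps_X * fps_deriv (fps_deriv W) - (fps_deriv F * W + F * fps_deriv W)"
    unfolding G_def by (simp add: fps_deriv_mult algebra_simps)
  have c2: "fps_const (2::real) = 2" by simp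
  show ?thesis unfolding d using eF eW unfolding G_def c2 by algebra
qed

lemma Gzero:
  fixes F G :: "real fps"
  assumes "G = fps_X * (fps_X * fps_deriv G + G + F * G)"
  shows "G = 0"
proof -
  have "fps_nth G n = 0" for n
  proof (induction n rule: less_induct)
    case (less n)
    show ?case
    proof (cases n)
      case 0 then show ?thesis by (subst assms) simp
    next
      case (Suc k)
      have "fps_nth G n = fps_nth (fps_X * fps_deriv G + G + F * G) k"
        using Suc by (subst assms) simp
      also have "\<dots> = 0" using Suc less by (simp add: fps_mult_nth[of F G])
      finally show ?thesis .
    qed
  qed
  thus ?thesis by (simp add: fps_ext)
qed

lemma conv_identity: "real n * wseq n = (\<Sum>i=0..n. fseq i * wseq (n - i))"
proof -
  let ?G = "fps_X * fps_deriv (Abs_fps wseq) - Abs_fps fseq * Abs_fps wseq"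
  have "?G = 0" by (rule Gzero[OF Geq[OF eqF eqW]])
  hence "fps_nth ?G n = 0" by simp
  thus ?thesis by (cases n) (simp_all add: fps_mult_nth[of "Abs_fps fseq" "Abs_fps wseq"])
qed


definition LL :: real where "LL = 1 / (2 * pi)"

lemma LL_bounds: "0 < LL" "LL \<le> 1/6"
  using pi_gt3 by (auto simp: field_simps LL_def)

lemma vseq_mono: "incseq (\<lambda>n. vseq (Suc n))"
proof (rule incseq_SucI)
  fix n
  have "vseq (Suc n) \<ge> 0" unfolding vseq_def using wseq_nonneg by simp
  thus "vseq (Suc n) \<le> vseq (Suc (Suc n))"
    using vseq_Suc[of "Suc n"] by (simp add: mult_le_cancel_left1 del: of_nat_Suc)
qed

lemma vseq_le: assumes "n \<ge> 1" shows "vseq n \<le> LL"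
proof -
  have "(\<lambda>n. vseq (Suc n)) \<longlonglongrightarrow> LL" using vseq_lim unfolding LL_def by (rule LIMSEQ_Suc)
  from incseq_le[OF vseq_mono this, of "n - 1"] show ?thesis using assms by simp
qed

lemma ineq_u: fixes k :: real assumes "k \<ge> 1"
  shows "(1 + (5/36) / (k * (k + 1))) * ((k + 1) / (k + 1 - 5/36)) \<le> k / (k - 5/36)"
proof -
  let ?c = "5/36::real"
  have p: "k - ?c > 0" "k + 1 - ?c > 0" "k * (k+1) > 0" using assms by auto
  have eq: "(1 + ?c / (k * (k + 1))) * ((k + 1) / (k + 1 - ?c)) = (k*(k+1) + ?c) * (k+1) / (k * (k+1) * (k + 1 - ?c))"
    using p assms by (simp add: field_simps)
  have cr0: "(k*(k+1) + ?c) * (k+1) * (k - ?c) - k * (k * (k+1) * (k + 1 - ?c)) = - (?c * ?c) * (k + 1)"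
    by (simp add: field_simps)
  have cr: "(k*(k+1) + ?c) * (k+1) * (k - ?c) - k * (k * (k+1) * (k + 1 - ?c)) \<le> 0"
    unfolding cr0 using assms by simp
  have "(k*(k+1) + ?c) * (k+1) / (k * (k+1) * (k + 1 - ?c)) \<le> k / (k - ?c)"
    using p cr by (subst frac_le_eq) (auto intro!: divide_nonpos_pos)
  thus ?thesis using eq by simp
qed

definition useq :: "nat \<Rightarrow> real" where "useq n = vseq n * (real n / (real n - 5/36))"

lemma useq_mono: "decseq (\<lambda>n. useq (Suc n))"
proof (rule decseq_SucI)
  fix n
  have v0: "vseq (Suc n) \<ge> 0" unfolding vseq_def using wseq_nonneg by simp
  have r: "real (Suc (Suc n)) = real (Suc n) + 1" by simp
  have h1: "1 \<le> Suc n" by simp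
  have "useq (Suc (Suc n)) = vseq (Suc (Suc n)) * (real (Suc (Suc n)) / (real (Suc (Suc n)) - 5/36))"
    unfolding useq_def ..
  also have "\<dots> = vseq (Suc n) * ((1 + (5/36) / (real (Suc n) * (real (Suc n) + 1))) * ((real (Suc n) + 1) / (real (Suc n) + 1 - 5/36)))"
    unfolding vseq_Suc[of "Suc n", OF h1] r[symmetric] by (simp only: mult.assoc)
  also have "\<dots> \<le> vseq (Suc n) * (real (Suc n) / (real (Suc n) - 5/36))"
    by (rule mult_left_mono[OF ineq_u v0]) simp
  finally show "useq (Suc (Suc n)) \<le> useq (Suc n)" unfolding useq_def .
qed

lemma useq_ge: assumes "n \<ge> 1" shows "LL \<le> useq n"
proof -
  have "(\<lambda>n. real n / (real n - 5/36)) \<longlonglongrightarrow> 1" by real_asymp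
  hence "useq \<longlonglongrightarrow> LL * 1" unfolding useq_def[abs_def] LL_def by (intro tendsto_mult vseq_lim)
  hence "(\<lambda>n. useq (Suc n)) \<longlonglongrightarrow> LL" by (simp add: LIMSEQ_Suc)
  from decseq_ge[OF useq_mono this, of "n - 1"] show ?thesis using assms by simp
qed

definition Sseq :: "nat \<Rightarrow> real" where
  "Sseq n = (\<Sum>i=1..n-1. fseq i * wseq (n - i))"

lemma dseq_eq: assumes "n \<ge> 1" shows "dseq n = vseq n - Sseq n / fact n"
proof -
  obtain m where m: "n = Suc m" using assms by (cases n) auto
  have "(\<Sum>i=0..n. fseq i * wseq (n - i)) = fseq 0 * wseq n + Sseq n + fseq n * wseq 0"
  proof -
    have "(\<Sum>i=0..Suc m. fseq i * wseq (Suc m - i)) = (\<Sum>i=0..m. fseq i * wseq (Suc m - i)) + fseq (Suc m) * wseq 0"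
      by (subst sum.atLeast0_atMost_Suc) simp
    also have "(\<Sum>i=0..m. fseq i * wseq (Suc m - i)) = fseq 0 * wseq (Suc m) + (\<Sum>i=Suc 0..m. fseq i * wseq (Suc m - i))"
      by (subst sum.atLeast_Suc_atMost) simp_all
    finally show ?thesis unfolding Sseq_def m by simp
  qed
  hence "real n * wseq n = Sseq n + fseq n" using conv_identity[of n] by (simp add: fseq_0 wseq_0)
  hence "fseq n = real n * wseq n - Sseq n" by simp
  moreover have "fact n = real n * fact m" using m by simp
  moreover have "vseq n = wseq n / fact m" using m by (simp add: vseq_def)
  moreover have "(fact m :: real) > 0" "real n > 0" using assms by auto
  ultimately have "dseq n = (real n * wseq n - Sseq n) / (real n * fact m)" unfolding fseq_def
    by (simp add: field_simps)
  also have "\<dots> = wseq n / fact m - Sseq n / (real n * fact m)"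
    using \<open>real n > 0\<close> \<open>(fact m :: real) > 0\<close> by (simp add: field_simps)
  finally show ?thesis using \<open>fact n = real n * fact m\<close> \<open>vseq n = wseq n / fact m\<close> by simp
qed

lemma Sseq_nonneg: "Sseq n \<ge> 0"
  unfolding Sseq_def fseq_def
  by (intro sum_nonneg mult_nonneg_nonneg wseq_nonneg dseq_nonneg) auto

lemma dseq_le: assumes "n \<ge> 1" shows "dseq n \<le> LL"
proof -
  have "Sseq n / fact n \<ge> 0" using Sseq_nonneg by simp
  thus ?thesis using dseq_eq[OF assms] vseq_le[OF assms] by linarith
qed

lemma term_bound:
  assumes m: "m \<ge> 1" and i: "i \<in> {1..m}"
  shows "fseq i * wseq (Suc m - i) / fact (Suc m)
     \<le> LL^2 / (real (Suc m) * real m) + (if i = m then LL^2 / real (Suc m) else 0)"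
proof -
  have i1: "1 \<le> i" "i \<le> m" using i by auto
  have fi: "fseq i \<le> fact i * LL" unfolding fseq_def by (rule mult_left_mono[OF dseq_le[OF i1(1)]]) simp
  have sm: "Suc m - i \<ge> 1" using i1 by simp
  have ws: "wseq (Suc m - i) = vseq (Suc m - i) * fact (m - i)"
    unfolding vseq_def using i1 by simp
  have wi: "wseq (Suc m - i) \<le> LL * fact (m - i)"
    unfolding ws using vseq_le[OF sm] by (intro mult_right_mono) auto
  have "fseq i * wseq (Suc m - i) \<le> (fact i * LL) * (LL * fact (m - i))"
    using fi wi LL_bounds by (intro mult_mono) (auto simp: fseq_def wseq_nonneg dseq_nonneg)
  hence A0: "fseq i * wseq (Suc m - i) / fact (Suc m) \<le> (fact i * LL) * (LL * fact (m - i)) / fact (Suc m)"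
    by (intro divide_right_mono) auto
  have "(fact i * LL) * (LL * fact (m - i)) / fact (Suc m) = LL^2 * (fact i * fact (m - i) / fact (Suc m))"
    by (simp add: power2_eq_square)
  with A0 have A: "fseq i * wseq (Suc m - i) / fact (Suc m) \<le> LL^2 * (fact i * fact (m - i) / fact (Suc m))"
    by (simp only:)
  have bf: "fact i * fact (m - i) * real (m choose i) = (fact m :: real)"
    using binomial_fact_lemma[OF i1(2)] by (metis of_nat_fact of_nat_mult)
  have cpos: "real (m choose i) > 0" using i1 by simp
  have B: "fact i * fact (m - i) / fact (Suc m) = 1 / (real (Suc m) * real (m choose i))"
    using bf cpos by (simp add: field_simps del: of_nat_Suc)
  have C: "1 / (real (Suc m) * real (m choose i)) \<le> 1 / (real (Suc m) * real m) + (if i = m then 1 / real (Suc m) else 0)"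
  proof (cases "i = m")
    case True
    then show ?thesis using m by simp
  next
    case False
    hence "m \<le> m choose i" using i1 by (intro upper_le_binomial) auto
    hence "real m \<le> real (m choose i)" by simp
    hence "1 / (real (Suc m) * real (m choose i)) \<le> 1 / (real (Suc m) * real m)"
      using m cpos by (intro divide_left_mono mult_left_mono mult_pos_pos) auto
    then show ?thesis using False by simp
  qed
  have "LL^2 * (fact i * fact (m - i) / fact (Suc m)) \<le> LL^2 * (1 / (real (Suc m) * real m) + (if i = m then 1 / real (Suc m) else 0))"
    unfolding B by (intro mult_left_mono C) auto
  also have "\<dots> = LL^2 / (real (Suc m) * real m) + (if i = m then LL^2 / real (Suc m) else 0)"
    by (simp add: algebra_simps)
  finally show ?thesis using A by linarith
qed

lemma S_bound: assumes "n \<ge> 1" shows "Sseq n / fact n \<le> 2 * LL^2 / real n"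
proof (cases "n = 1")
  case True then show ?thesis by (simp add: Sseq_def)
next
  case False
  then obtain m where nm: "n = Suc m" and m: "m \<ge> 1" using assms by (cases n) auto
  have "Sseq n / fact n = (\<Sum>i=1..m. fseq i * wseq (Suc m - i) / fact (Suc m))"
    unfolding Sseq_def nm by (simp add: sum_divide_distrib)
  also have "\<dots> \<le> (\<Sum>i=1..m. LL^2 / (real (Suc m) * real m) + (if i = m then LL^2 / real (Suc m) else 0))"
    by (rule sum_mono) (rule term_bound[OF m])
  also have "\<dots> = real m * (LL^2 / (real (Suc m) * real m)) + LL^2 / real (Suc m)"
    using m by (simp add: sum.distrib)
  also have "\<dots> = 2 * LL^2 / real n"
    using m unfolding nm by (simp add: field_simps del: of_nat_Suc)
  finally show ?thesis .
qed

lemma main_bound: assumes "n \<ge> 1" shows "\<bar>LL - dseq n\<bar> \<le> 1 / real n"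
proof -
  have np: "real n \<ge> 1" using assms by simp
  have d0: "dseq n \<le> LL" by (rule dseq_le[OF assms])
  have v: "vseq n \<le> LL" by (rule vseq_le[OF assms])
  have v0: "vseq n \<ge> 0" unfolding vseq_def using wseq_nonneg by simp
  have u: "LL \<le> vseq n * (real n / (real n - 5/36))" using useq_ge[OF assms] by (simp add: useq_def)
  have q: "real n / (real n - 5/36) = 1 + (5/36) / (real n - 5/36)" using np by (simp add: field_simps)
  have u2: "LL - vseq n \<le> vseq n * ((5/36) / (real n - 5/36))" using u unfolding q by (simp add: algebra_simps)
  have "vseq n * ((5/36) / (real n - 5/36)) \<le> LL * ((5/36) / (real n - 5/36))"
    using v np by (intro mult_right_mono) auto
  also have "(5/36) / (real n - 5/36) \<le> 1 / (4 * real n)" using np by (simp add: field_simps)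
  hence "LL * ((5/36) / (real n - 5/36)) \<le> LL * (1 / (4 * real n))" using LL_bounds by (intro mult_left_mono) auto
  finally have e1: "LL - vseq n \<le> LL / (4 * real n)" using u2 by simp
  have e2: "Sseq n / fact n \<le> 2 * LL^2 / real n" by (rule S_bound[OF assms])
  have "LL / (4 * real n) + 2 * LL^2 / real n = (LL/4 + 2 * LL^2) / real n" using np by (simp add: field_simps)
  also have "\<dots> \<le> 1 / real n"
  proof (intro divide_right_mono)
    have "LL^2 \<le> (1/6)^2" using LL_bounds by (intro power_mono) auto
    hence "LL^2 \<le> 1/36" by (simp add: power_divide)
    thus "LL/4 + 2 * LL^2 \<le> 1" using LL_bounds by linarith
  qed simp
  finally have "LL - dseq n \<le> 1 / real n" using e1 e2 dseq_eq[OF assms] by linarith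
  thus ?thesis using d0 by simp
qed

theorem lemma4p1:
  shows "(\<lambda>l. 1 / (2 * pi) - dseq l) \<in> O(\<lambda>l. 1 / real l)"
proof (rule bigoI[where c = 1])
  show "eventually (\<lambda>l. norm (1 / (2 * pi) - dseq l) \<le> 1 * norm (1 / real l)) at_top"
    using eventually_ge_at_top[of "1::nat"]
    by eventually_elim (use main_bound in \<open>auto simp: LL_def\<close>)
qed


end
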